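(* Let $d\ge2$ and $\mathbf{Y}\sim\mathcal{SUT}_{d,m}(\boldsymbol{\xi},\boldsymbol{\Omega},\boldsymbol{\Delta},\boldsymbol{\tau},\bar{\boldsymbol{\Gamma}},\nu)$, partitioned as $\mathbf{Y}=(Y_1,\mathbf{Y}_2^\top)^\top$ with $Y_1\in\mathbb{R}$, $\mathbf{Y}_2\in\mathbb{R}^{d-1}$, and correspondingly $\boldsymbol{\xi}=(\xi_1,\boldsymbol{\xi}_2^\top)^\top$ and $\boldsymbol{\Delta}=(\boldsymbol{\Delta}_1^\top,\boldsymbol{\Delta}_2^\top)^\top$ with $\boldsymbol{\Delta}_1\in\mathbb{R}^{m}$ (a row) and $\boldsymbol{\Delta}_2\in\mathbb{R}^{(d-1)\times m}$. If $\boldsymbol{\Delta}_2=\mathbf{0}$, then $\mathbf{Y}$ is in canonical form: all skewness is carried by the first component, in the sense that $\mathbf{Y}_2-\boldsymbol{\xi}_2$ has a distribution symmetric about the origin (i.e. $\mathbf{Y}_2-\boldsymbol{\xi}_2$ and $-(\mathbf{Y}_2-\boldsymbol{\xi}_2)$ have the same distribution), while $Y_1$ has a univariate unified skew-$t$ distribution.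
   Context: Notation: $\mathcal{T}_k(\boldsymbol{\mu},\boldsymbol{\Sigma},\nu)$ is the $k$-dimensional Student $t$ distribution with location $\boldsymbol{\mu}$, dispersion $\boldsymbol{\Sigma}$ and $\nu>0$ degrees of freedom. Parameters: $\boldsymbol{\xi}\in\mathbb{R}^d$; $\boldsymbol{\Omega}$ a $d\times d$ positive definite matrix, $\boldsymbol{\omega}=\mathrm{diag}(\boldsymbol{\Omega})^{1/2}$, $\bar{\boldsymbol{\Omega}}=\boldsymbol{\omega}^{-1}\boldsymbol{\Omega}\boldsymbol{\omega}^{-1}$; $\boldsymbol{\Delta}$ a $d\times m$ matrix; $\bar{\boldsymbol{\Gamma}}$ an $m\times m$ correlation matrix; $\boldsymbol{\tau}\in\mathbb{R}^m$; $\nu>0$; with $\bar{\boldsymbol{\Omega}}^*=\begin{pmatrix}\bar{\boldsymbol{\Gamma}}&\boldsymbol{\Delta}^\top\\ \boldsymbol{\Delta}&\bar{\boldsymbol{\Omega}}\end{pmatrix}$ positive definite. Definition: if $(\mathbf{U}_0^\top,\mathbf{U}_1^\top)^\top\sim\mathcal{T}_{m+d}(\mathbf{0},\bar{\boldsymbol{\Omega}}^*,\nu)$ ($\mathbf{U}_0\in\mathbb{R}^m$, $\mathbf{U}_1\in\mathbb{R}^d$) and $\mathbf{Z}$ has the conditional distribution of $\mathbf{U}_1$ given $\mathbf{U}_0+\boldsymbol{\tau}>\mathbf{0}$ (componentwise), then $\mathbf{Y}=\boldsymbol{\xi}+\boldsymbol{\omega}\mathbf{Z}$ has distribution $\mathcal{SUT}_{d,m}(\boldsymbol{\xi},\boldsymbol{\Omega},\boldsymbol{\Delta},\boldsymbol{\tau},\bar{\boldsymbol{\Gamma}},\nu)$.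 A canonical form of such a vector is one in which all the skewness is concentrated in the first component and the remaining components are symmetric. *)

theory Defs
  imports "HOL-Probability.Probability"
begin

text \<open>Matrices are type-indexed (HOL-Analysis). A matrix A :: real^'c^'r has rows
indexed by 'r and columns by 'c, entry A$i$j.\<close>

definition pos_def_mat :: "real^'k^'k \<Rightarrow> bool" where
  "pos_def_mat S \<longleftrightarrow> transpose S = S \<and> (\<forall>x. x \<noteq> 0 \<longrightarrow> x \<bullet> (S *v x) > 0)"

definition correlation_mat :: "real^'k^'k \<Rightarrow> bool" where
  "correlation_mat G \<longleftrightarrow> transpose G = G \<and> (\<forall>x. x \<bullet> (G *v x) \<ge> 0) \<and> (\<forall>i. G$i$i = 1)"

definition mvt_density :: "real^'k \<Rightarrow> real^'k^'k \<Rightarrow> real \<Rightarrow> real^'k \<Rightarrow> real" where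
  "mvt_density mu S nu x =
     (let k = real CARD('k) in
      Gamma ((nu + k) / 2) / (Gamma (nu / 2) * (nu * pi) powr (k / 2) * sqrt (det S))
      * (1 + ((x - mu) \<bullet> (matrix_inv S *v (x - mu))) / nu) powr (- (nu + k) / 2))"

definition mvt :: "real^'k \<Rightarrow> real^'k^'k \<Rightarrow> real \<Rightarrow> (real^'k) measure" where
  "mvt mu S nu = density lborel (\<lambda>x. ennreal (mvt_density mu S nu x))"

definition omega_vec :: "real^'d^'d \<Rightarrow> real^'d" where
  "omega_vec Om = (\<chi> i. sqrt (Om$i$i))"

definition Omega_bar :: "real^'d^'d \<Rightarrow> real^'d^'d" where
  "Omega_bar Om = (\<chi> i j. Om$i$j / (omega_vec Om $ i * omega_vec Om $ j))"

text \<open>The joint (m+d)x(m+d) matrix Omega-bar-star = [[Gamma, Delta^T],[Delta, Omega-bar]];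
the first block ('m) corresponds to U0, the second ('d) to U1.\<close>
definition Omega_star :: "real^'d^'d \<Rightarrow> real^'m^'d \<Rightarrow> real^'m^'m \<Rightarrow> real^('m + 'd)^('m + 'd)" where
  "Omega_star Om Dl G = (\<chi> a b. case (a, b) of
       (Inl i, Inl j) \<Rightarrow> G$i$j
     | (Inl i, Inr j) \<Rightarrow> Dl$j$i
     | (Inr i, Inl j) \<Rightarrow> Dl$i$j
     | (Inr i, Inr j) \<Rightarrow> Omega_bar Om $i$j)"

definition SUT_params :: "real^'d^'d \<Rightarrow> real^'m^'d \<Rightarrow> real^'m^'m \<Rightarrow> real \<Rightarrow> bool" where
  "SUT_params Om Dl G nu \<longleftrightarrow>
     pos_def_mat Om \<and> correlation_mat G \<and> pos_def_mat (Omega_star Om Dl G) \<and> nu > 0"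

text \<open>The SUT_{d,m}(xi, Omega, Delta, tau, Gamma-bar, nu) distribution on real^'d:
the law of Y = xi + omega Z, where Z has the conditional law of U1 given U0 + tau > 0,
(U0,U1) ~ T_{m+d}(0, Omega-bar-star, nu).\<close>
definition SUT :: "real^'d \<Rightarrow> real^'d^'d \<Rightarrow> real^'m^'d \<Rightarrow> real^'m \<Rightarrow> real^'m^'m \<Rightarrow> real
                   \<Rightarrow> (real^'d) measure" where
  "SUT xi Om Dl tau G nu =
     (let T = mvt 0 (Omega_star Om Dl G) nu;
          A = {u :: real^('m + 'd). \<forall>i. u $ Inl i + tau $ i > 0};
          C = density T (\<lambda>u. indicator A u / emeasure T A)
      in distr C borel (\<lambda>u. \<chi> j. xi $ j + omega_vec Om $ j * u $ Inr j))"

end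

theory Submission
  imports Defs
begin


lemma posdef_inj: assumes "pos_def_mat S" "S *v x = 0" shows "x = 0"
  using assms unfolding pos_def_mat_def by force

lemma posdef_invertible: assumes "pos_def_mat (S::real^'n^'n)" shows "invertible S"
  using posdef_inj[OF assms] matrix_left_invertible_ker invertible_left_inverse by blast

lemma matrix_inv_both: assumes "invertible (A::real^'n^'n)"
  shows "A ** matrix_inv A = mat 1" "matrix_inv A ** A = mat 1"
  using someI_ex[OF assms[unfolded invertible_def]] unfolding matrix_inv_def by auto

lemma matrix_inv_unique: assumes "(B::real^'n^'n) ** A = mat 1" shows "matrix_inv A = B"
proof -
  have inv: "invertible A" using assms invertible_left_inverse by blast
  have "matrix_inv A = (B ** A) ** matrix_inv A" by (simp add: assms matrix_mul_lid)
  also have "\<dots> = B ** (A ** matrix_inv A)" by (simp add: matrix_mul_assoc)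
  also have "\<dots> = B" using matrix_inv_both[OF inv] by simp
  finally show ?thesis .
qed

lemma posdef_inv: assumes "pos_def_mat (S::real^'n^'n)" shows "pos_def_mat (matrix_inv S)"
proof -
  have inv: "invertible S" by (rule posdef_invertible[OF assms])
  have sym: "transpose S = S" using assms pos_def_mat_def by blast
  have "transpose (matrix_inv S) ** S = mat 1"
    by (metis matrix_inv_both(1)[OF inv] matrix_transpose_mul sym transpose_mat)
  then have t: "matrix_inv S = transpose (matrix_inv S)" by (rule matrix_inv_unique)
  show ?thesis unfolding pos_def_mat_def
  proof (intro conjI allI impI)
    show "transpose (matrix_inv S) = matrix_inv S" using t by simp
    fix x :: "real^'n" assume x: "x \<noteq> 0"
    define y where "y = matrix_inv S *v x"
    have Sy: "S *v y = x" unfolding y_def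
      by (simp add: matrix_vector_mul_assoc matrix_inv_both[OF inv])
    have "y \<noteq> 0" using Sy x by auto
    then have "y \<bullet> (S *v y) > 0" using assms pos_def_mat_def by blast
    then show "x \<bullet> (matrix_inv S *v x) > 0" using Sy y_def by (simp add: inner_commute)
  qed
qed

lemma scaleR_mat_vec: "(c *\<^sub>R (A::real^'n^'m)) *v x = c *\<^sub>R (A *v x)"
  by (simp add: matrix_vector_mult_def vec_eq_iff sum_distrib_left algebra_simps)

lemma det_continuous: "continuous_on UNIV (\<lambda>t::real. det ((1 - t) *\<^sub>R mat 1 + t *\<^sub>R (S::real^'n^'n)))"
  unfolding det_def by (intro continuous_intros)

lemma posdef_det_pos: assumes "pos_def_mat (S::real^'n^'n)" shows "det S > 0"
proof (rule ccontr)
  assume "\<not> det S > 0"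
  define \<phi> where "\<phi> t = det ((1 - t) *\<^sub>R mat 1 + t *\<^sub>R S)" for t :: real
  have "\<phi> 1 \<le> 0" using \<open>\<not> det S > 0\<close> by (simp add: \<phi>_def)
  moreover have "\<phi> 0 = 1" by (simp add: \<phi>_def)
  moreover have "continuous_on {0..1} \<phi>" unfolding \<phi>_def
    using det_continuous continuous_on_subset by blast
  ultimately obtain t where t: "0 \<le> t" "t \<le> 1" "\<phi> t = 0"
    using IVT2'[of \<phi> 1 0 0] by auto
  define M where "M = (1 - t) *\<^sub>R mat 1 + t *\<^sub>R S"
  have "det M = 0" using t by (simp add: \<phi>_def M_def)
  then have "\<not> invertible M" by (simp add: invertible_det_nz)
  then obtain x where x: "x \<noteq> 0" "M *v x = 0"
    using matrix_left_invertible_ker invertible_left_inverse by blast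
  have Mx: "M *v x = (1 - t) *\<^sub>R x + t *\<^sub>R (S *v x)"
    unfolding M_def by (simp add: matrix_vector_mult_add_rdistrib scaleR_mat_vec)
  have "x \<bullet> (M *v x) = (1 - t) * (x \<bullet> x) + t * (x \<bullet> (S *v x))"
    by (simp add: Mx inner_add_right)
  moreover have "x \<bullet> x > 0" using x by simp
  moreover have "x \<bullet> (S *v x) > 0" using x assms pos_def_mat_def by blast
  ultimately have "x \<bullet> (M *v x) > 0" using t
    by (cases "t = 0") (auto intro!: add_pos_nonneg add_nonneg_pos)
  then show False using x by simp
qed


definition splitv :: "('j::finite + 'k::finite \<Rightarrow> 'i) \<Rightarrow> real^'i \<Rightarrow> (real^'j) \<times> (real^'k)" where
  "splitv \<sigma> x = ((\<chi> j. x $ \<sigma> (Inl j)), (\<chi> k. x $ \<sigma> (Inr k)))"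

definition joinv :: "('j::finite + 'k::finite \<Rightarrow> 'i::finite) \<Rightarrow> (real^'j) \<times> (real^'k) \<Rightarrow> real^'i" where
  "joinv \<sigma> p = (\<chi> i. case inv \<sigma> i of Inl j \<Rightarrow> fst p $ j | Inr k \<Rightarrow> snd p $ k)"

lemma joinv_splitv: "bij \<sigma> \<Longrightarrow> joinv \<sigma> (splitv \<sigma> x) = x"
  unfolding joinv_def splitv_def
  by (auto simp: vec_eq_iff bij_inv_eq_iff split: sum.split) (metis bij_inv_eq_iff)+

lemma splitv_joinv: "bij \<sigma> \<Longrightarrow> splitv \<sigma> (joinv \<sigma> p) = p"
  unfolding joinv_def splitv_def
  by (cases p) (auto simp: vec_eq_iff bij_is_inj)

lemma vec_nth_measurable[measurable]: "(\<lambda>x::real^'n. x $ i) \<in> borel_measurable borel"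
  by (intro borel_measurable_continuous_onI continuous_intros)

lemma vec_measurableI:
  assumes "\<And>i. (\<lambda>x. f i x) \<in> borel_measurable M"
  shows "(\<lambda>x. \<chi> i. f i x :: real^'n) \<in> borel_measurable M"
  by (subst borel_measurable_euclidean_space) (auto simp: Basis_vec_def inner_axis assms)

lemma splitv_measurable[measurable]: "splitv \<sigma> \<in> borel_measurable borel"
  unfolding splitv_def borel_prod[symmetric] by (intro measurable_Pair vec_measurableI) measurable

lemma joinv_measurable[measurable]: "joinv \<sigma> \<in> borel_measurable borel"
  unfolding joinv_def
proof (intro vec_measurableI)
  fix i show "(\<lambda>p. case inv \<sigma> i of Inl j \<Rightarrow> fst p $ j | Inr k \<Rightarrow> snd p $ k) \<in> borel_measurable borel"
    by (cases "inv \<sigma> i") (auto intro!: borel_measurable_continuous_onI continuous_intros)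
qed

lemma prod_Basis_vec: "(\<Prod>b\<in>(Basis::(real^'n) set). f b) = (\<Prod>i\<in>UNIV. f (axis i 1))"
proof -
  have B: "(Basis::(real^'n) set) = range (\<lambda>i. axis i 1)" unfolding Basis_vec_def by auto
  have "inj (\<lambda>i::'n. axis i (1::real))" by (auto intro!: injI simp: axis_eq_axis)
  then show ?thesis unfolding B by (subst prod.reindex) (auto simp: o_def)
qed

lemma box_pair_eq: "box (la, lb) (ua, ub) = box la ua \<times> box lb ub"
  by (auto simp: box_def Basis_prod_def ball_Un)

lemma prod_Basis_pair:
  fixes f :: "'a::euclidean_space \<times> 'b::euclidean_space \<Rightarrow> real"
  shows "(\<Prod>b\<in>Basis. f b) = (\<Prod>b\<in>Basis. f (b, 0)) * (\<Prod>b\<in>Basis. f (0, b))"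
proof -
  have [simp]: "inj_on (\<lambda>u. (u, 0::'b)) Basis" "inj_on (\<lambda>u. (0::'a, u)) Basis"
    "(\<lambda>u. (u, 0::'b)) ` Basis \<inter> (\<lambda>u. (0::'a, u)) ` Basis = {}"
    by (auto intro!: inj_onI)
  show ?thesis by (simp add: Basis_prod_def prod.union_disjoint prod.reindex o_def)
qed

lemma splitv_preimage_box:
  assumes "bij \<sigma>"
  shows "splitv \<sigma> -` box (la, lb) (ua, ub) = box (joinv \<sigma> (la, lb)) (joinv \<sigma> (ua, ub))"
proof -
  have "x \<in> box (joinv \<sigma> (la, lb)) (joinv \<sigma> (ua, ub)) \<longleftrightarrow>
        (\<forall>z. (joinv \<sigma> (la, lb)) $ \<sigma> z < x $ \<sigma> z \<and> x $ \<sigma> z < (joinv \<sigma> (ua, ub)) $ \<sigma> z)" for x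
    unfolding mem_box_cart by (metis assms bij_inv_eq_iff)
  moreover have "(joinv \<sigma> p) $ \<sigma> z = (case z of Inl j \<Rightarrow> fst p $ j | Inr k \<Rightarrow> snd p $ k)" for p z
    unfolding joinv_def using assms by (simp add: bij_is_inj)
  moreover have "(\<forall>z. P z) \<longleftrightarrow> (\<forall>j. P (Inl j)) \<and> (\<forall>k. P (Inr k))" for P :: "'a + 'b \<Rightarrow> bool"
    by (metis sum.exhaust)
  ultimately show ?thesis
    unfolding box_pair_eq splitv_def
    by (auto simp: mem_box_cart)
qed

lemma distr_splitv:
  assumes "bij (\<sigma> :: 'j::finite + 'k::finite \<Rightarrow> 'i::finite)"
  shows "distr lborel borel (splitv \<sigma>) = (lborel :: ((real^'j) \<times> (real^'k)) measure)"
proof (rule lborel_eqI[symmetric])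
  fix l u :: "(real^'j) \<times> (real^'k)"
  assume lu: "\<And>b. b \<in> Basis \<Longrightarrow> l \<bullet> b \<le> u \<bullet> b"
  obtain la lb where l: "l = (la, lb)" by (cases l)
  obtain ua ub where u: "u = (ua, ub)" by (cases u)
  have lea: "la $ j \<le> ua $ j" for j
    using lu[of "(axis j 1, 0)"] by (auto simp: l u Basis_prod_def inner_axis)
  have leb: "lb $ k \<le> ub $ k" for k
    using lu[of "(0, axis k 1)"] by (auto simp: l u Basis_prod_def inner_axis)
  let ?L = "joinv \<sigma> (la, lb)" and ?U = "joinv \<sigma> (ua, ub)"
  have jv: "(joinv \<sigma> p) $ \<sigma> z = (case z of Inl j \<Rightarrow> fst p $ j | Inr k \<Rightarrow> snd p $ k)" for p z
    unfolding joinv_def using assms by (simp add: bij_is_inj)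
  have LU: "?L $ i \<le> ?U $ i" for i
  proof -
    obtain z where "i = \<sigma> z" using assms by (metis bij_pointE)
    then show ?thesis using lea leb jv by (cases z) auto
  qed
  have "emeasure (distr lborel borel (splitv \<sigma>)) (box l u) = emeasure lborel (box ?L ?U)"
    by (simp add: emeasure_distr l u splitv_preimage_box[OF assms])
  also have "\<dots> = (\<Prod>b\<in>Basis. (?U - ?L) \<bullet> b)"
    using LU by (intro emeasure_lborel_box) (auto simp: Basis_vec_def inner_axis)
  also have "(\<Prod>b\<in>Basis. (?U - ?L) \<bullet> b) = (\<Prod>i\<in>UNIV. (?U - ?L) $ i)"
    by (simp add: prod_Basis_vec inner_axis)
  also have "\<dots> = (\<Prod>z\<in>UNIV. (?U - ?L) $ \<sigma> z)"
    using prod.reindex_bij_betw[of \<sigma> UNIV UNIV "\<lambda>i. (?U - ?L) $ i"] assms by (simp add: bij_def)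
  also have "\<dots> = (\<Prod>j\<in>UNIV. (ua - la) $ j) * (\<Prod>k\<in>UNIV. (ub - lb) $ k)"
    by (subst UNIV_Plus_UNIV[symmetric], subst prod.Plus) (auto simp: o_def jv)
  also have "\<dots> = (\<Prod>b\<in>Basis. (u - l) \<bullet> b)"
    by (simp add: prod_Basis_pair prod_Basis_vec inner_axis l u)
  finally show "emeasure (distr lborel borel (splitv \<sigma>)) (box l u) = (\<Prod>b\<in>Basis. (u - l) \<bullet> b)" .
qed simp


lemma distr_fst_density:
  fixes g :: "('a::euclidean_space \<times> 'b::euclidean_space) \<Rightarrow> ennreal"
  assumes [measurable]: "g \<in> borel_measurable borel"
  shows "distr (density lborel g) borel fst = density lborel (\<lambda>a. \<integral>\<^sup>+b. g (a, b) \<partial>lborel)"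
proof (rule measure_eqI)
  fix A :: "'a set" assume A: "A \<in> sets (distr (density lborel g) borel fst)"
  then have [measurable]: "A \<in> sets borel" by simp
  have "emeasure (distr (density lborel g) borel fst) A = (\<integral>\<^sup>+z. g z * indicator (fst -` A) z \<partial>lborel)"
  proof -
    have fm: "fst \<in> borel_measurable (borel :: ('a \<times> 'b) measure)"
      by (intro borel_measurable_continuous_onI continuous_intros)
    have pre: "fst -` A \<in> sets (lborel::('a\<times>'b) measure)"
      using measurable_sets_borel[OF fm, of A] by simp
    show ?thesis
      by (subst emeasure_distr) (auto simp: fm emeasure_density[OF _ pre] mult.commute
          intro!: measurable_sets_borel[OF fm])
  qed
  also have "\<dots> = (\<integral>\<^sup>+z. g z * indicator (fst -` A) z \<partial>(lborel \<Otimes>\<^sub>M lborel))"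
    by (simp add: lborel_prod)
  also have "\<dots> = (\<integral>\<^sup>+a. \<integral>\<^sup>+b. g (a, b) * indicator A a \<partial>lborel \<partial>lborel)"
  proof -
    have m: "(\<lambda>z. g z * indicator (fst -` A) z) \<in> borel_measurable (lborel \<Otimes>\<^sub>M lborel)"
    proof -
      have fm: "fst \<in> borel_measurable (borel :: ('a \<times> 'b) measure)"
        by (intro borel_measurable_continuous_onI continuous_intros)
      have pre: "fst -` A \<in> sets (borel::('a\<times>'b) measure)"
        using measurable_sets_borel[OF fm, of A] by simp
      show ?thesis unfolding lborel_prod measurable_lborel2
        using pre by (intro borel_measurable_times_ennreal assms borel_measurable_indicator) auto
    qed
    have i: "indicator (fst -` A) (x, y) = (indicator A x :: ennreal)" for x y
      by (simp add: indicator_def)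
    have e: "(\<integral>\<^sup>+ x. \<integral>\<^sup>+ y. g (x, y) * indicator (fst -` A) (x, y) \<partial>lborel \<partial>lborel) = (\<integral>\<^sup>+a. \<integral>\<^sup>+b. g (a, b) * indicator A a \<partial>lborel \<partial>lborel)"
      by (simp only: i)
    show ?thesis using lborel.nn_integral_fst[OF m] e by simp
  qed
  also have "\<dots> = (\<integral>\<^sup>+a. (\<integral>\<^sup>+b. g (a, b) \<partial>lborel) * indicator A a \<partial>lborel)"
    by (simp add: nn_integral_multc)
  also have "\<dots> = emeasure (density lborel (\<lambda>a. \<integral>\<^sup>+b. g (a, b) \<partial>lborel)) A"
  proof -
    have "g \<in> borel_measurable (lborel \<Otimes>\<^sub>M lborel)" unfolding lborel_prod measurable_lborel2 by (rule assms)
    from lborel.borel_measurable_nn_integral_fst[OF this]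
    have gm: "(\<lambda>a. \<integral>\<^sup>+b. g (a, b) \<partial>lborel) \<in> borel_measurable lborel" .
    show ?thesis by (simp add: emeasure_density gm)
  qed
  finally show "emeasure (distr (density lborel g) borel fst) A = emeasure (density lborel (\<lambda>a. \<integral>\<^sup>+b. g (a, b) \<partial>lborel)) A" .
qed simp


declare transpose_matrix_vector[simp del]

lemma transpose_zero_mat: "transpose (0::real^'n^'m) = 0"
  by (simp add: transpose_def vec_eq_iff)

lemma inner_mat_left: "x \<bullet> ((M::real^'n^'m) *v y) = (transpose M *v x) \<bullet> y"
  by (simp add: dot_lmul_matrix[symmetric] transpose_matrix_vector)

lemma posdef_sym_inner: assumes "transpose M = (M::real^'n^'n)" shows "x \<bullet> (M *v y) = y \<bullet> (M *v x)"
  by (metis assms inner_commute inner_mat_left)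

lemma posdef_compress:
  fixes S :: "real^'i^'i" and E :: "real^'j^'i"
  assumes "pos_def_mat S" "transpose E ** E = mat 1"
  shows "pos_def_mat (transpose E ** S ** E)"
  unfolding pos_def_mat_def
proof (intro conjI allI impI)
  have "transpose S = S" using assms(1) pos_def_mat_def by blast
  then show "transpose (transpose E ** S ** E) = transpose E ** S ** E"
    by (simp add: matrix_transpose_mul matrix_mul_assoc)
  fix x :: "real^'j" assume x: "x \<noteq> 0"
  have "transpose E *v (E *v x) = x" by (simp add: matrix_vector_mul_assoc assms(2))
  then have "E *v x \<noteq> 0" using x by auto
  then have "(E *v x) \<bullet> (S *v (E *v x)) > 0" using assms(1) pos_def_mat_def by blast
  moreover have "x \<bullet> ((transpose E ** S ** E) *v x) = (E *v x) \<bullet> (S *v (E *v x))"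
    by (simp add: inner_mat_left matrix_vector_mul_assoc[symmetric])
  ultimately show "x \<bullet> ((transpose E ** S ** E) *v x) > 0" by simp
qed

lemma posdef_nonneg: "pos_def_mat M \<Longrightarrow> x \<bullet> (M *v x) \<ge> 0"
  unfolding pos_def_mat_def by (cases "x = 0") (auto intro: less_imp_le)

lemma quad_split:
  fixes S :: "real^'i^'i" and EJ :: "real^'j^'i" and EK :: "real^'k^'i"
  assumes S: "pos_def_mat S"
    and JJ: "transpose EJ ** EJ = mat 1" and KK: "transpose EK ** EK = mat 1"
    and KJ: "transpose EK ** EJ = 0"
    and sum1: "EJ ** transpose EJ + EK ** transpose EK = mat 1"
  defines "P \<equiv> matrix_inv S"
  defines "S1 \<equiv> transpose EJ ** S ** EJ"
  defines "W \<equiv> transpose EK ** P ** EK"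
  defines "B \<equiv> matrix_inv W ** (transpose EK ** P ** EJ)"
  shows "(EJ *v a + EK *v b) \<bullet> (P *v (EJ *v a + EK *v b))
         = a \<bullet> (matrix_inv S1 *v a) + (b + B *v a) \<bullet> (W *v (b + B *v a))"
proof -
  have Sinv: "invertible S" by (rule posdef_invertible[OF S])
  have PS: "P ** S = mat 1" "S ** P = mat 1" using matrix_inv_both[OF Sinv] by (auto simp: P_def)
  have Ppd: "pos_def_mat P" unfolding P_def by (rule posdef_inv[OF S])
  have Psym: "transpose P = P" using Ppd pos_def_mat_def by blast
  have Wpd: "pos_def_mat W" unfolding W_def by (rule posdef_compress[OF Ppd KK])
  have Winv: "W ** matrix_inv W = mat 1" using matrix_inv_both[OF posdef_invertible[OF Wpd]] by simp
  have S1pd: "pos_def_mat S1" unfolding S1_def by (rule posdef_compress[OF S JJ])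
  define x where "x = EJ *v a + EK *v b"
  define c where "c = b + B *v a"
  define v where "v = x - EK *v c"
  have JK: "transpose EJ ** EK = 0"
    using KJ by (metis matrix_transpose_mul transpose_transpose transpose_zero_mat)
  have c_eq: "W *v c = transpose EK *v (P *v x)"
  proof -
    have "W *v c = W *v b + (W ** matrix_inv W) *v ((transpose EK ** P ** EJ) *v a)"
      unfolding c_def B_def by (simp add: matrix_vector_right_distrib matrix_vector_mul_assoc matrix_mul_assoc)
    also have "\<dots> = transpose EK *v (P *v x)"
      unfolding Winv unfolding x_def W_def
      by (simp add: matrix_vector_right_distrib matrix_vector_mul_assoc matrix_mul_assoc)
    finally show ?thesis .
  qed
  have Kv: "transpose EK *v (P *v v) = 0"
    unfolding v_def using c_eq
    by (simp add: matrix_vector_mult_diff_distrib matrix_vector_mul_assoc W_def matrix_mul_assoc)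
  have Jv: "transpose EJ *v v = a"
    unfolding v_def x_def
    by (simp add: matrix_vector_mult_diff_distrib matrix_vector_right_distrib matrix_vector_mul_assoc JJ JK)
  define w where "w = transpose EJ *v (P *v v)"
  have Pv: "P *v v = EJ *v w"
  proof -
    have "P *v v = (EJ ** transpose EJ + EK ** transpose EK) *v (P *v v)" by (simp add: sum1)
    also have "\<dots> = EJ *v w"
      by (simp add: matrix_vector_mult_add_rdistrib matrix_vector_mul_assoc[symmetric] Kv w_def)
    finally show ?thesis .
  qed
  have vS: "v = S *v (EJ *v w)"
    using PS(2) Pv by (metis matrix_vector_mul_assoc matrix_vector_mul_lid)
  have aw: "a = S1 *v w"
    using Jv vS unfolding S1_def by (simp add: matrix_vector_mul_assoc matrix_mul_assoc)
  have S1i: "matrix_inv S1 ** S1 = mat 1"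
    using matrix_inv_both[OF posdef_invertible[OF S1pd]] by simp
  have w_eq: "w = matrix_inv S1 *v a"
    by (simp add: aw matrix_vector_mul_assoc S1i)
  have Qv: "v \<bullet> (P *v v) = a \<bullet> (matrix_inv S1 *v a)"
    using Pv Jv w_eq by (simp add: inner_mat_left)
  have cross: "(EK *v c) \<bullet> (P *v v) = 0"
    by (simp add: inner_mat_left[symmetric] Kv inner_commute)
    (metis Kv inner_mat_left inner_zero_right inner_commute)
  have QK: "(EK *v c) \<bullet> (P *v (EK *v c)) = c \<bullet> (W *v c)"
  proof -
    have "c \<bullet> (W *v c) = c \<bullet> (transpose EK *v (P *v (EK *v c)))"
      by (simp add: W_def matrix_vector_mul_assoc matrix_mul_assoc)
    also have "\<dots> = (EK *v c) \<bullet> (P *v (EK *v c))" by (simp add: inner_mat_left)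
    finally show ?thesis by simp
  qed
  have "x = v + EK *v c" by (simp add: v_def)
  then have "x \<bullet> (P *v x) = v \<bullet> (P *v v) + 2 * ((EK *v c) \<bullet> (P *v v)) + (EK *v c) \<bullet> (P *v (EK *v c))"
    using posdef_sym_inner[OF Psym, of v "EK *v c"]
    by (simp add: matrix_vector_right_distrib inner_add_left inner_add_right)
  also have "\<dots> = a \<bullet> (matrix_inv S1 *v a) + c \<bullet> (W *v c)"
    using Qv cross QK by simp
  finally show ?thesis unfolding x_def c_def .
qed


lemma ite_mult1: "(if P then 1 else 0) * (x::real) = (if P then x else 0)" by simp
lemma ite_mult2: "(x::real) * (if P then 1 else 0) = (if P then x else 0)" by simp

lemma sum_ind_inj: fixes g :: "'a::finite \<Rightarrow> 'b" assumes "inj g" shows "(\<Sum>j\<in>UNIV. (if g j0 = g j then 1 else 0) * (h j::real)) = h j0"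
proof -
  have "(\<Sum>j\<in>UNIV. (if g j0 = g j then 1 else 0) * (h j::real)) = (\<Sum>j\<in>UNIV. if j0 = j then h j else 0)"
    using assms by (intro sum.cong) (auto simp: inj_eq)
  also have "\<dots> = h j0" by simp
  finally show ?thesis .
qed

lemma sum_ind_none: fixes g :: "'a::finite \<Rightarrow> 'b" assumes "\<And>j. g j \<noteq> c" shows "(\<Sum>j\<in>UNIV. (if c = g j then 1 else 0) * (h j::real)) = 0"
  using assms by (intro sum.neutral) auto

definition emb :: "('a::finite \<Rightarrow> 'i::finite) \<Rightarrow> real^'a^'i" where
  "emb f = (\<chi> i a. if i = f a then 1 else 0)"

lemma emb_TT: assumes "inj f" shows "transpose (emb f) ** emb f = mat 1"
proof -
  have "(\<Sum>i\<in>UNIV. (if i = f a then 1 else 0) * (if i = f b then 1 else (0::real))) = (if a = b then 1 else 0)" for a b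
    using assms by (auto simp: ite_mult1 ite_mult2 inj_eq cong: if_cong)
  then show ?thesis by (simp add: matrix_matrix_mult_def transpose_def emb_def mat_def vec_eq_iff)
qed

lemma emb_T0: assumes "\<And>a b. g b \<noteq> f a" shows "transpose (emb g) ** emb f = 0"
proof -
  have "(\<Sum>i\<in>UNIV. (if i = g b then 1 else 0) * (if i = f a then 1 else (0::real))) = 0" for a b
    using assms[of b a] by (auto simp: ite_mult1 ite_mult2 cong: if_cong)
  then show ?thesis by (simp add: matrix_matrix_mult_def transpose_def emb_def vec_eq_iff)
qed

lemma emb_sum1:
  assumes "bij (\<sigma> :: 'j::finite + 'k::finite \<Rightarrow> 'i::finite)"
  shows "emb (\<lambda>j. \<sigma> (Inl j)) ** transpose (emb (\<lambda>j. \<sigma> (Inl j))) + emb (\<lambda>k. \<sigma> (Inr k)) ** transpose (emb (\<lambda>k. \<sigma> (Inr k))) = mat 1"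
proof -
  have "(\<Sum>j\<in>UNIV. (if i = \<sigma> (Inl j) then 1 else 0) * (if i' = \<sigma> (Inl j) then 1 else (0::real)))
      + (\<Sum>k\<in>UNIV. (if i = \<sigma> (Inr k) then 1 else 0) * (if i' = \<sigma> (Inr k) then 1 else (0::real)))
      = (if i = i' then 1 else 0)" for i i'
  proof -
    obtain z where z: "i = \<sigma> z" using assms by (metis bij_pointE)
    have inj: "inj \<sigma>" using assms bij_is_inj by blast
    have i1: "inj (\<lambda>j. \<sigma> (Inl j))" "inj (\<lambda>k. \<sigma> (Inr k))" using inj by (auto simp: inj_def)
    show ?thesis
    proof (cases z)
      case (Inl j0)
      show ?thesis unfolding z Inl
        using sum_ind_inj[OF i1(1), of j0 "\<lambda>j. if i' = \<sigma> (Inl j) then 1 else 0"]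
          sum_ind_none[of "\<lambda>k. \<sigma> (Inr k)" "\<sigma> (Inl j0)" "\<lambda>k. if i' = \<sigma> (Inr k) then 1 else 0"] inj
        by (simp add: inj_eq)
    next
      case (Inr k0)
      show ?thesis unfolding z Inr
        using sum_ind_inj[OF i1(2), of k0 "\<lambda>j. if i' = \<sigma> (Inr j) then 1 else 0"]
          sum_ind_none[of "\<lambda>k. \<sigma> (Inl k)" "\<sigma> (Inr k0)" "\<lambda>k. if i' = \<sigma> (Inl k) then 1 else 0"] inj
        by (simp add: inj_eq)
    qed
  qed
  then show ?thesis by (simp add: matrix_matrix_mult_def transpose_def emb_def mat_def vec_eq_iff)
qed

lemma emb_joinv:
  assumes "bij (\<sigma> :: 'j::finite + 'k::finite \<Rightarrow> 'i::finite)"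
  shows "emb (\<lambda>j. \<sigma> (Inl j)) *v a + emb (\<lambda>k. \<sigma> (Inr k)) *v b = joinv \<sigma> (a, b)"
proof -
  have inj: "inj \<sigma>" using assms bij_is_inj by blast
  have i1: "inj (\<lambda>j. \<sigma> (Inl j))" "inj (\<lambda>k. \<sigma> (Inr k))" using inj by (auto simp: inj_def)
  have "(\<Sum>j\<in>UNIV. (if \<sigma> z = \<sigma> (Inl j) then 1 else 0) * a $ j) + (\<Sum>k\<in>UNIV. (if \<sigma> z = \<sigma> (Inr k) then 1 else 0) * b $ k)
     = (case z of Inl j \<Rightarrow> a $ j | Inr k \<Rightarrow> b $ k)" for z
  proof (cases z)
    case (Inl j0)
    then show ?thesis using sum_ind_inj[OF i1(1), of j0 "\<lambda>j. a $ j"]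
       sum_ind_none[of "\<lambda>k. \<sigma> (Inr k)" "\<sigma> (Inl j0)" "\<lambda>k. b $ k"] inj by (simp add: inj_eq)
  next
    case (Inr k0)
    then show ?thesis using sum_ind_inj[OF i1(2), of k0 "\<lambda>j. b $ j"]
       sum_ind_none[of "\<lambda>k. \<sigma> (Inl k)" "\<sigma> (Inr k0)" "\<lambda>k. a $ k"] inj by (simp add: inj_eq)
  qed
  note calc = this
  have "(emb (\<lambda>j. \<sigma> (Inl j)) *v a + emb (\<lambda>k. \<sigma> (Inr k)) *v b) $ i = joinv \<sigma> (a, b) $ i" for i
  proof -
    obtain z where z: "i = \<sigma> z" using assms by (metis bij_pointE)
    have z': "inv \<sigma> i = z" using z inj by simp
    have "(emb (\<lambda>j. \<sigma> (Inl j)) *v a + emb (\<lambda>k. \<sigma> (Inr k)) *v b) $ i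
       = (\<Sum>j\<in>UNIV. (if \<sigma> z = \<sigma> (Inl j) then 1 else 0) * a $ j) + (\<Sum>k\<in>UNIV. (if \<sigma> z = \<sigma> (Inr k) then 1 else 0) * b $ k)"
      by (simp add: emb_def matrix_vector_mult_def z)
    also have "\<dots> = joinv \<sigma> (a, b) $ i" using calc[of z] by (cases z) (simp_all add: joinv_def z')
    finally show ?thesis .
  qed
  then show ?thesis by (simp add: vec_eq_iff)
qed

lemma emb_compress:
  assumes "inj f"
  shows "transpose (emb f) ** S ** emb f = (\<chi> a b. S $ f a $ f b)"
  using assms by (simp add: matrix_matrix_mult_def transpose_def emb_def vec_eq_iff ite_mult1 ite_mult2 cong: if_cong)


lemma qf_cont: "continuous_on UNIV (\<lambda>x::real^'n. x \<bullet> ((M::real^'n^'n) *v x))"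
  unfolding matrix_vector_mult_def inner_vec_def by (intro continuous_intros)

lemma qf_meas[measurable]: "(\<lambda>x::real^'n. x \<bullet> ((M::real^'n^'n) *v x)) \<in> borel_measurable borel"
  by (rule borel_measurable_continuous_onI[OF qf_cont])

lemma qf_scale: "(s *\<^sub>R x) \<bullet> ((M::real^'n^'n) *v (s *\<^sub>R x)) = s^2 * (x \<bullet> (M *v x))"
  by (simp add: matrix_vector_mult_def inner_vec_def vec_eq_iff sum_distrib_left algebra_simps power2_eq_square
      sum.distrib[symmetric] vector_scaleR_component)

lemma scale_integral:
  fixes W :: "real^'k^'k" and d :: "real^'k"
  assumes W: "pos_def_mat W" and nu: "nu > 0" and q: "q \<ge> 0"
  shows "(\<integral>\<^sup>+ b. ennreal ((1 + (q + (b + d) \<bullet> (W *v (b + d))) / nu) powr (- p)) \<partial>lborel)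
       = ennreal (((nu + q) / nu) powr (real CARD('k) / 2 - p))
         * (\<integral>\<^sup>+ w. ennreal ((1 + (w \<bullet> (W *v w)) / nu) powr (- p)) \<partial>lborel)"
proof -
  define F where "F b = ennreal ((1 + (q + b \<bullet> (W *v b)) / nu) powr (- p))" for b :: "real^'k"
  have Fm[measurable]: "F \<in> borel_measurable borel" unfolding F_def by measurable
  have "(\<integral>\<^sup>+ b. ennreal ((1 + (q + (b + d) \<bullet> (W *v (b + d))) / nu) powr (- p)) \<partial>lborel)
      = (\<integral>\<^sup>+ b. F (d + b) \<partial>lborel)" unfolding F_def by (simp add: add.commute)
  also have "\<dots> = (\<integral>\<^sup>+ b. F b \<partial>distr lborel borel ((+) d))"
    by (subst nn_integral_distr) auto
  also have "\<dots> = (\<integral>\<^sup>+ b. F b \<partial>lborel)" by (simp add: lborel_distr_plus)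
  finally have step1: "(\<integral>\<^sup>+ b. ennreal ((1 + (q + (b + d) \<bullet> (W *v (b + d))) / nu) powr (- p)) \<partial>lborel) = (\<integral>\<^sup>+ b. F b \<partial>lborel)" .
  define s where "s = sqrt ((nu + q) / nu)"
  have s_pos: "s > 0" unfolding s_def using nu q by simp
  have s2: "s^2 = (nu + q) / nu" unfolding s_def using nu q by simp
  have "(\<integral>\<^sup>+ b. F b \<partial>lborel) = (\<integral>\<^sup>+ b. F b \<partial>density (distr lborel borel (\<lambda>x. 0 + s *\<^sub>R x)) (\<lambda>_. ennreal (\<bar>s\<bar> ^ DIM(real^'k))))"
    using lborel_affine[of s "0::real^'k"] s_pos by simp
  also have "\<dots> = (\<integral>\<^sup>+ w. ennreal (s ^ CARD('k)) * F (s *\<^sub>R w) \<partial>lborel)"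
    using s_pos by (simp add: nn_integral_density nn_integral_distr)
  also have "\<dots> = (\<integral>\<^sup>+ w. ennreal (s ^ CARD('k) * (s^2) powr (-p)) * ennreal ((1 + (w \<bullet> (W *v w)) / nu) powr (- p)) \<partial>lborel)"
  proof (intro nn_integral_cong)
    fix w :: "real^'k"
    have Q: "w \<bullet> (W *v w) \<ge> 0" by (rule posdef_nonneg[OF W])
    have "1 + (q + (s *\<^sub>R w) \<bullet> (W *v (s *\<^sub>R w))) / nu = s^2 * (1 + (w \<bullet> (W *v w)) / nu)"
      unfolding qf_scale s2 using nu by (simp add: field_simps)
    then have "(1 + (q + (s *\<^sub>R w) \<bullet> (W *v (s *\<^sub>R w))) / nu) powr (-p) = (s^2) powr (-p) * (1 + (w \<bullet> (W *v w)) / nu) powr (-p)"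
      using Q nu by (simp add: powr_mult)
    then show "ennreal (s ^ CARD('k)) * F (s *\<^sub>R w) = ennreal (s ^ CARD('k) * (s^2) powr (-p)) * ennreal ((1 + (w \<bullet> (W *v w)) / nu) powr (- p))"
      unfolding F_def using s_pos by (simp add: ennreal_mult[symmetric] mult.assoc)
  qed
  also have "\<dots> = ennreal (s ^ CARD('k) * (s^2) powr (-p)) * (\<integral>\<^sup>+ w. ennreal ((1 + (w \<bullet> (W *v w)) / nu) powr (- p)) \<partial>lborel)"
  proof -
    have m: "(\<lambda>w::real^'k. ennreal ((1 + (w \<bullet> (W *v w)) / nu) powr (- p))) \<in> borel_measurable borel"
      by measurable
    show ?thesis by (rule nn_integral_cmult) (subst measurable_lborel2, rule m)
  qed
  finally have step2: "(\<integral>\<^sup>+ b. F b \<partial>lborel) = ennreal (s ^ CARD('k) * (s^2) powr (-p)) * (\<integral>\<^sup>+ w. ennreal ((1 + (w \<bullet> (W *v w)) / nu) powr (- p)) \<partial>lborel)" .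
  have ee: "s ^ CARD('k) * (s^2) powr (-p) = ((nu + q) / nu) powr (real CARD('k) / 2 - p)"
  proof -
    have "(s^2) powr (real CARD('k) / 2) = (s powr 2) powr (real CARD('k) / 2)"
      using s_pos by (simp add: powr_realpow)
    also have "\<dots> = s powr (real CARD('k))" by (simp add: powr_powr)
    also have "\<dots> = s ^ CARD('k)" using s_pos by (simp add: powr_realpow)
    finally have e: "(s^2) powr (real CARD('k) / 2) = s ^ CARD('k)" .
    have "s ^ CARD('k) * (s^2) powr (-p) = (s^2) powr (real CARD('k) / 2) * (s^2) powr (-p)"
      by (simp only: e)
    also have "\<dots> = (s^2) powr (real CARD('k) / 2 + - p)" by (rule powr_add[symmetric])
    also have "\<dots> = ((nu + q) / nu) powr (real CARD('k) / 2 - p)" by (simp only: s2 diff_conv_add_uminus)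
    finally show ?thesis .
  qed
  show ?thesis using step1 step2 ee by simp
qed


lemma qf_meas_raw[measurable (raw)]:
  "f \<in> borel_measurable M \<Longrightarrow> (\<lambda>x. f x \<bullet> ((A::real^'n^'n) *v f x)) \<in> borel_measurable M"
  using measurable_compose[OF _ qf_meas] by blast

lemma mvt_density_meas[measurable]: "mvt_density mu S nu \<in> borel_measurable borel"
  unfolding mvt_density_def Let_def by measurable

lemma card_bij_sum:
  assumes "bij (\<sigma> :: 'j::finite + 'k::finite \<Rightarrow> 'i::finite)"
  shows "CARD('i) = CARD('j) + CARD('k)"
proof -
  have "CARD('j + 'k) = CARD('i)" using bij_betw_same_card[of \<sigma> UNIV UNIV] assms by (simp add: bij_def)
  then show ?thesis by (simp add: card_UNIV_sum)
qed

lemma mvt_marginal: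
  fixes \<sigma> :: "'j::finite + 'k::finite \<Rightarrow> 'i::finite" and S :: "real^'i^'i"
  assumes bij: "bij \<sigma>" and S: "pos_def_mat S" and nu: "nu > 0"
  shows "\<exists>\<kappa>. distr (mvt 0 S nu) borel (\<lambda>x. fst (splitv \<sigma> x))
            = density (mvt 0 (\<chi> j j'. S $ \<sigma> (Inl j) $ \<sigma> (Inl j')) nu) (\<lambda>_. \<kappa>)"
proof -
  have inj: "inj \<sigma>" using bij bij_is_inj by blast
  have injJ: "inj (\<lambda>j. \<sigma> (Inl j))" and injK: "inj (\<lambda>k. \<sigma> (Inr k))" using inj by (auto simp: inj_def)
  define EJ where "EJ = emb (\<lambda>j. \<sigma> (Inl j))"
  define EK where "EK = emb (\<lambda>k. \<sigma> (Inr k))"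
  have JJ: "transpose EJ ** EJ = mat 1" unfolding EJ_def by (rule emb_TT[OF injJ])
  have KK: "transpose EK ** EK = mat 1" unfolding EK_def by (rule emb_TT[OF injK])
  have KJ: "transpose EK ** EJ = 0" unfolding EJ_def EK_def by (rule emb_T0) (use inj in \<open>simp add: inj_eq\<close>)
  have sum1: "EJ ** transpose EJ + EK ** transpose EK = mat 1" unfolding EJ_def EK_def by (rule emb_sum1[OF bij])
  define P where "P = matrix_inv S"
  define S1 where "S1 = transpose EJ ** S ** EJ"
  define W where "W = transpose EK ** P ** EK"
  define B where "B = matrix_inv W ** (transpose EK ** P ** EJ)"
  have S1eq: "S1 = (\<chi> j j'. S $ \<sigma> (Inl j) $ \<sigma> (Inl j'))" unfolding S1_def EJ_def by (rule emb_compress[OF injJ])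
  have Ppd: "pos_def_mat P" unfolding P_def by (rule posdef_inv[OF S])
  have S1pd: "pos_def_mat S1" unfolding S1_def by (rule posdef_compress[OF S JJ])
  have Wpd: "pos_def_mat W" unfolding W_def by (rule posdef_compress[OF Ppd KK])
  have quad: "joinv \<sigma> (a, b) \<bullet> (P *v joinv \<sigma> (a, b))
      = a \<bullet> (matrix_inv S1 *v a) + (b + B *v a) \<bullet> (W *v (b + B *v a))" for a b
    using quad_split[OF S JJ KK KJ sum1, of a b] emb_joinv[OF bij, of a b]
    unfolding P_def S1_def W_def B_def EJ_def EK_def by simp
  define n where "n = real CARD('i)"
  define nJ where "nJ = real CARD('j)"
  define nK where "nK = real CARD('k)"
  have n_eq: "n = nJ + nK" unfolding n_def nJ_def nK_def using card_bij_sum[OF bij] by simp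
  define c where "c = Gamma ((nu + n) / 2) / (Gamma (nu / 2) * (nu * pi) powr (n / 2) * sqrt (det S))"
  define c1 where "c1 = Gamma ((nu + nJ) / 2) / (Gamma (nu / 2) * (nu * pi) powr (nJ / 2) * sqrt (det S1))"
  have c_pos: "c > 0" unfolding c_def using nu posdef_det_pos[OF S] by (simp add: n_def)
  have c1_pos: "c1 > 0" unfolding c1_def using nu posdef_det_pos[OF S1pd] by (simp add: nJ_def)
  have f_eq: "mvt_density 0 S nu x = c * (1 + (x \<bullet> (P *v x)) / nu) powr (- ((nu + n) / 2))" for x
    unfolding mvt_density_def Let_def c_def P_def n_def by (simp add: minus_divide_left)
  have f1_eq: "mvt_density 0 S1 nu a = c1 * (1 + (a \<bullet> (matrix_inv S1 *v a)) / nu) powr (- ((nu + nJ) / 2))" for a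
    unfolding mvt_density_def Let_def c1_def nJ_def by (simp add: minus_divide_left)
  define K0 where "K0 = (\<integral>\<^sup>+ w. ennreal ((1 + (w \<bullet> (W *v w)) / nu) powr (- ((nu + n) / 2))) \<partial>lborel)"
  define \<kappa> where "\<kappa> = ennreal (c / c1) * K0"
  have inner: "(\<integral>\<^sup>+ b. ennreal (mvt_density 0 S nu (joinv \<sigma> (a, b))) \<partial>lborel) = \<kappa> * ennreal (mvt_density 0 S1 nu a)" for a
  proof -
    define q where "q = a \<bullet> (matrix_inv S1 *v a)"
    have q: "q \<ge> 0" unfolding q_def by (rule posdef_nonneg[OF posdef_inv[OF S1pd]])
    have "(\<integral>\<^sup>+ b. ennreal (mvt_density 0 S nu (joinv \<sigma> (a, b))) \<partial>lborel)
        = (\<integral>\<^sup>+ b. ennreal c * ennreal ((1 + (q + (b + B *v a) \<bullet> (W *v (b + B *v a))) / nu) powr (- ((nu + n) / 2))) \<partial>lborel)"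
      using c_pos by (intro nn_integral_cong) (simp add: f_eq quad q_def ennreal_mult)
    also have "\<dots> = ennreal c * (\<integral>\<^sup>+ b. ennreal ((1 + (q + (b + B *v a) \<bullet> (W *v (b + B *v a))) / nu) powr (- ((nu + n) / 2))) \<partial>lborel)"
    proof -
      have m: "(\<lambda>b::real^'k. ennreal ((1 + (q + (b + B *v a) \<bullet> (W *v (b + B *v a))) / nu) powr (- ((nu + n) / 2)))) \<in> borel_measurable borel"
        by measurable
      show ?thesis by (rule nn_integral_cmult) (subst measurable_lborel2, rule m)
    qed
    also have "\<dots> = ennreal c * (ennreal (((nu + q) / nu) powr (nK / 2 - (nu + n) / 2)) * K0)"
      unfolding K0_def nK_def by (subst scale_integral[OF Wpd nu q]) simp
    also have "\<dots> = ennreal (c * (1 + q / nu) powr (- ((nu + nJ) / 2))) * K0"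
    proof -
      have "nK / 2 - (nu + n) / 2 = - ((nu + nJ) / 2)" using n_eq by (simp add: field_simps)
      moreover have "(nu + q) / nu = 1 + q / nu" using nu by (simp add: field_simps)
      ultimately show ?thesis using c_pos by (simp add: ennreal_mult mult.assoc)
    qed
    also have "\<dots> = \<kappa> * ennreal (mvt_density 0 S1 nu a)"
    proof -
      define X where "X = (1 + q / nu) powr (- ((nu + nJ) / 2))"
      have X: "X \<ge> 0" unfolding X_def by simp
      have "c * X = (c / c1) * (c1 * X)" using c1_pos by simp
      then have e1: "ennreal (c * X) = ennreal (c / c1) * ennreal (c1 * X)"
        using c_pos c1_pos X by (simp add: ennreal_mult[symmetric])
      show ?thesis unfolding \<kappa>_def f1_eq q_def[symmetric] X_def[symmetric] e1
        by (simp add: ac_simps)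
    qed
    finally show ?thesis .
  qed
  have D1: "distr (mvt 0 S nu) borel (splitv \<sigma>) = density lborel (\<lambda>p. ennreal (mvt_density 0 S nu (joinv \<sigma> p)))"
  proof -
    have "density (distr lborel borel (splitv \<sigma>)) (\<lambda>p. ennreal (mvt_density 0 S nu (joinv \<sigma> p)))
        = distr (density lborel (\<lambda>x. ennreal (mvt_density 0 S nu (joinv \<sigma> (splitv \<sigma> x))))) borel (splitv \<sigma>)"
      by (rule density_distr) measurable
    then show ?thesis unfolding distr_splitv[OF bij] joinv_splitv[OF bij] mvt_def by simp
  qed
  have D2: "distr (mvt 0 S nu) borel (\<lambda>x. fst (splitv \<sigma> x)) = distr (distr (mvt 0 S nu) borel (splitv \<sigma>)) borel fst"
  proof -
    have fm: "fst \<in> borel_measurable (borel :: ((real^'j) \<times> (real^'k)) measure)"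
      by (intro borel_measurable_continuous_onI continuous_intros)
    have sm: "splitv \<sigma> \<in> mvt 0 S nu \<rightarrow>\<^sub>M borel" unfolding mvt_def by simp
    show ?thesis by (subst distr_distr[OF fm sm]) (simp add: o_def)
  qed
  have "distr (mvt 0 S nu) borel (\<lambda>x. fst (splitv \<sigma> x)) = density lborel (\<lambda>a. \<kappa> * ennreal (mvt_density 0 S1 nu a))"
    unfolding D2 D1 by (subst distr_fst_density) (simp_all add: inner)
  also have "\<dots> = density (mvt 0 S1 nu) (\<lambda>_. \<kappa>)"
    unfolding mvt_def by (subst density_density_eq) (simp_all add: mult.commute)
  finally show ?thesis unfolding S1eq by blast
qed


lemma ennreal_self_div_one: "(x::ennreal) / x = 1 \<Longrightarrow> x \<noteq> 0 \<and> x \<noteq> top"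
  by (cases "x = 0"; cases "x = top") (auto simp: divide_ennreal_def)

lemma density_cond_mass:
  assumes A: "A \<in> sets T"
  shows "emeasure (density T (\<lambda>u. indicator A u / emeasure T A)) (space T) = emeasure T A / emeasure T A"
proof -
  have "emeasure (density T (\<lambda>u. indicator A u / emeasure T A)) (space T)
      = (\<integral>\<^sup>+ u. indicator A u * inverse (emeasure T A) \<partial>T)"
    using A by (subst emeasure_density) (auto intro!: nn_integral_cong borel_measurable_times_ennreal simp: divide_ennreal_def
        split: split_indicator)
  also have "\<dots> = emeasure T A * inverse (emeasure T A)"
    using A by (subst nn_integral_multc) auto
  finally show ?thesis by (simp add: divide_ennreal_def)
qed

lemma ennreal_cancel_div:
  fixes k y x :: ennreal
  assumes "k \<noteq> 0" "k \<noteq> top" "y \<noteq> top"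
  shows "k * (x / (k * y)) = x / y"
proof -
  have "k * inverse k = 1" using assms ennreal_divide_self[of k]
    by (simp add: divide_ennreal_def top.not_eq_extremum)
  moreover have "inverse (k * y) = inverse k * inverse y"
    using assms by (intro ennreal_inverse_mult) (auto simp: top.not_eq_extremum)
  ultimately show ?thesis unfolding divide_ennreal_def
    by (metis mult.assoc mult.left_commute mult_1)
qed

lemma cond_lemma:
  fixes \<pi> :: "'a::euclidean_space \<Rightarrow> 'b::euclidean_space" and T :: "'a measure" and T1 :: "'b measure"
  assumes sT: "sets T = sets borel" and sT1: "sets T1 = sets borel"
    and \<pi>[measurable]: "\<pi> \<in> borel_measurable borel"
    and D: "distr T borel \<pi> = density T1 (\<lambda>_. \<kappa>)"
    and A1[measurable]: "A1 \<in> sets borel"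
    and TA: "emeasure T (\<pi> -` A1) \<noteq> 0" "emeasure T (\<pi> -` A1) \<noteq> top"
  shows "distr (density T (\<lambda>u. indicator (\<pi> -` A1) u / emeasure T (\<pi> -` A1))) borel \<pi>
       = density T1 (\<lambda>v. indicator A1 v / emeasure T1 A1)"
proof -
  have spT: "space T = UNIV" using sets_eq_imp_space_eq[OF sT] by simp
  have spT1: "space T1 = UNIV" using sets_eq_imp_space_eq[OF sT1] by simp
  have \<pi>T: "\<pi> \<in> T \<rightarrow>\<^sub>M borel" by (subst measurable_cong_sets[OF sT refl]) (rule \<pi>)
  have A1T1: "A1 \<in> sets T1" using sT1 by simp
  let ?TA = "emeasure T (\<pi> -` A1)"
  have "?TA = emeasure (distr T borel \<pi>) A1"
    by (simp add: emeasure_distr[OF \<pi>T] spT)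
  also have "\<dots> = \<kappa> * emeasure T1 A1"
    unfolding D using A1T1 by (simp add: emeasure_density nn_integral_cmult_indicator)
  finally have TAeq: "?TA = \<kappa> * emeasure T1 A1" .
  have k0: "\<kappa> \<noteq> 0" and kt: "\<kappa> \<noteq> top" and yt: "emeasure T1 A1 \<noteq> top"
    using TA TAeq by (auto simp: ennreal_mult_eq_top_iff)
  define g where "g v = indicator A1 v / ?TA" for v
  have gm: "g \<in> borel_measurable borel" unfolding g_def by measurable
  have gm1: "g \<in> borel_measurable T1" by (subst measurable_cong_sets[OF sT1 refl]) (rule gm)
  have "density T (\<lambda>u. indicator (\<pi> -` A1) u / ?TA) = density T (\<lambda>u. g (\<pi> u))"
    unfolding g_def by (simp add: indicator_def)
  then have "distr (density T (\<lambda>u. indicator (\<pi> -` A1) u / ?TA)) borel \<pi> = density (distr T borel \<pi>) g"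
    using density_distr[OF gm \<pi>T] by simp
  also have "\<dots> = density T1 (\<lambda>v. \<kappa> * g v)"
    unfolding D by (subst density_density_eq) (auto simp: gm1)
  also have "\<dots> = density T1 (\<lambda>v. indicator A1 v / emeasure T1 A1)"
    unfolding g_def TAeq using ennreal_cancel_div[OF k0 kt yt] by simp
  finally show ?thesis .
qed


definition sgnz :: "'a + 'b \<Rightarrow> real" where "sgnz z = (case z of Inl _ \<Rightarrow> 1 | Inr _ \<Rightarrow> -1)"

definition reflv :: "real^('a::finite + 'b::finite) \<Rightarrow> real^('a + 'b)" where
  "reflv v = (\<chi> z. sgnz z * v $ z)"

lemma sgnz_sq[simp]: "sgnz z * sgnz z = 1" by (simp add: sgnz_def split: sum.split)

lemma reflv_reflv[simp]: "reflv (reflv v) = v"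
  by (simp add: reflv_def vec_eq_iff mult.assoc[symmetric])

lemma reflv_Inl[simp]: "reflv v $ Inl i = v $ Inl i" by (simp add: reflv_def sgnz_def)
lemma reflv_Inr[simp]: "reflv v $ Inr k = - v $ Inr k" by (simp add: reflv_def sgnz_def)

lemma reflv_meas[measurable]: "reflv \<in> borel_measurable borel"
  unfolding reflv_def by (intro vec_measurableI) measurable

lemma lborel_reflv: "distr lborel borel reflv = (lborel :: (real^('a::finite + 'b::finite)) measure)"
proof (rule lborel_eqI[symmetric])
  fix l u :: "real^('a + 'b)"
  assume lu: "\<And>b. b \<in> Basis \<Longrightarrow> l \<bullet> b \<le> u \<bullet> b"
  have le: "l $ z \<le> u $ z" for z using lu[of "axis z 1"] by (auto simp: Basis_vec_def inner_axis)
  define l' where "l' = (\<chi> z. case z of Inl _ \<Rightarrow> l $ z | Inr _ \<Rightarrow> - u $ z)"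
  define u' where "u' = (\<chi> z. case z of Inl _ \<Rightarrow> u $ z | Inr _ \<Rightarrow> - l $ z)"
  have pre: "reflv -` box l u = box l' u'"
  proof -
    have "x \<in> reflv -` box l u \<longleftrightarrow> x \<in> box l' u'" for x
    proof -
      have "(l $ z < reflv x $ z \<and> reflv x $ z < u $ z) \<longleftrightarrow> (l' $ z < x $ z \<and> x $ z < u' $ z)" for z
        by (cases z) (auto simp: l'_def u'_def)
      then show ?thesis unfolding mem_box_cart vimage_eq by blast
    qed
    then show ?thesis by blast
  qed
  have le': "l' $ z \<le> u' $ z" for z using le by (cases z) (auto simp: l'_def u'_def)
  have "emeasure (distr lborel borel reflv) (box l u) = emeasure lborel (box l' u')"
    by (simp add: emeasure_distr pre)
  also have "\<dots> = (\<Prod>b\<in>Basis. (u' - l') \<bullet> b)"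
    using le' by (intro emeasure_lborel_box) (auto simp: Basis_vec_def inner_axis)
  also have "\<dots> = (\<Prod>z\<in>UNIV. (u' - l') $ z)" by (simp add: prod_Basis_vec inner_axis)
  also have "\<dots> = (\<Prod>z\<in>UNIV. (u - l) $ z)"
  proof -
    have "(u' - l') $ z = (u - l) $ z" for z by (cases z) (auto simp: l'_def u'_def)
    then show ?thesis by simp
  qed
  also have "\<dots> = (\<Prod>b\<in>Basis. (u - l) \<bullet> b)" by (simp add: prod_Basis_vec inner_axis)
  finally show "emeasure (distr lborel borel reflv) (box l u) = (\<Prod>b\<in>Basis. (u - l) \<bullet> b)" .
qed simp

lemma ite0_mult1: "(if P then c else 0) * (x::real) = (if P then c * x else 0)" by simp
lemma ite0_mult2: "(x::real) * (if P then c else 0) = (if P then x * c else 0)" by simp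

definition Dmat :: "real^('a::finite + 'b::finite)^('a + 'b)" where
  "Dmat = (\<chi> a b. if a = b then sgnz a else 0)"

lemma Dmat_vec: "Dmat *v v = reflv v"
  by (simp add: Dmat_def reflv_def matrix_vector_mult_def vec_eq_iff ite0_mult1 ite0_mult2)

lemma Dmat_T: "transpose (Dmat :: real^('a::finite + 'b::finite)^('a + 'b)) = Dmat"
  by (simp add: Dmat_def transpose_def vec_eq_iff)

lemma Dmat_sq: "(Dmat :: real^('a::finite + 'b::finite)^('a + 'b)) ** Dmat = mat 1"
  by (simp add: Dmat_def matrix_matrix_mult_def mat_def vec_eq_iff ite0_mult1 ite0_mult2)

lemma Dmat_conj:
  fixes S :: "real^('a::finite + 'b::finite)^('a + 'b)"
  assumes "\<And>i k. S $ Inl i $ Inr k = 0" "\<And>i k. S $ Inr k $ Inl i = 0"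
  shows "Dmat ** S ** Dmat = S"
proof -
  have "sgnz a * S $ a $ b * sgnz b = S $ a $ b" for a b
    using assms by (cases a; cases b) (auto simp: sgnz_def)
  then show ?thesis
    by (simp add: Dmat_def matrix_matrix_mult_def vec_eq_iff ite0_mult1 ite0_mult2)
qed

lemma qf_reflv:
  fixes S :: "real^('a::finite + 'b::finite)^('a + 'b)"
  assumes S: "pos_def_mat S" and z1: "\<And>i k. S $ Inl i $ Inr k = 0" and z2: "\<And>i k. S $ Inr k $ Inl i = 0"
  shows "reflv v \<bullet> (matrix_inv S *v reflv v) = v \<bullet> (matrix_inv S *v v)"
proof -
  have inv: "invertible S" by (rule posdef_invertible[OF S])
  let ?P = "matrix_inv S"
  have DD: "X ** Dmat ** Dmat = X" for X :: "real^('a + 'b)^('a + 'b)"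
    by (metis Dmat_sq matrix_mul_assoc matrix_mul_rid)
  have "(Dmat ** ?P ** Dmat) ** S = Dmat ** ?P ** (Dmat ** S ** Dmat) ** Dmat"
    by (simp add: matrix_mul_assoc DD)
  also have "\<dots> = Dmat ** (?P ** S) ** Dmat" using Dmat_conj[OF z1 z2] by (simp add: matrix_mul_assoc)
  also have "\<dots> = mat 1" using matrix_inv_both(2)[OF inv] Dmat_sq by (simp add: matrix_mul_assoc)
  finally have "?P = Dmat ** ?P ** Dmat" by (rule matrix_inv_unique)
  then have "reflv v \<bullet> (?P *v reflv v) = reflv v \<bullet> ((Dmat ** ?P ** Dmat) *v reflv v)" by simp
  also have "\<dots> = (Dmat *v reflv v) \<bullet> (?P *v (Dmat *v reflv v))"
    by (simp add: inner_mat_left Dmat_T matrix_vector_mul_assoc[symmetric])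
  also have "\<dots> = v \<bullet> (?P *v v)" by (simp add: Dmat_vec)
  finally show ?thesis .
qed

lemma mvt_reflv:
  fixes S :: "real^('a::finite + 'b::finite)^('a + 'b)"
  assumes S: "pos_def_mat S" and z1: "\<And>i k. S $ Inl i $ Inr k = 0" and z2: "\<And>i k. S $ Inr k $ Inl i = 0"
  shows "mvt_density 0 S nu (reflv v) = mvt_density 0 S nu v"
  unfolding mvt_density_def Let_def using qf_reflv[OF S z1 z2] by simp

lemma cond_reflv:
  fixes S :: "real^('a::finite + 'b::finite)^('a + 'b)" and A :: "(real^('a + 'b)) set" and nu :: real
  assumes S: "pos_def_mat S" and z1: "\<And>i k. S $ Inl i $ Inr k = 0" and z2: "\<And>i k. S $ Inr k $ Inl i = 0"
    and A: "\<And>v. reflv v \<in> A \<longleftrightarrow> v \<in> A" and Am[measurable]: "A \<in> sets borel"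
  defines "C \<equiv> density (mvt 0 S nu) (\<lambda>v. indicator A v / emeasure (mvt 0 S nu) A)"
  shows "distr C borel reflv = C"
proof -
  define h where "h v = ennreal (mvt_density 0 S nu v) * (indicator A v / emeasure (mvt 0 S nu) A)" for v
  have hm: "h \<in> borel_measurable borel" unfolding h_def by measurable
  have C: "C = density lborel h"
    unfolding C_def mvt_def h_def by (subst density_density_eq) auto
  have hr: "h (reflv v) = h v" for v
    unfolding h_def using mvt_reflv[OF S z1 z2] A by (simp add: indicator_def)
  have "density (distr lborel borel reflv) h = distr (density lborel (\<lambda>x. h (reflv x))) borel reflv"
    by (rule density_distr[OF hm]) measurable
  then have "distr (density lborel h) borel reflv = density lborel h"
    unfolding lborel_reflv hr by (rule sym)
  then show ?thesis unfolding C .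
qed


lemma sets_mvt[simp]: "sets (mvt mu S nu) = sets borel"
  by (simp add: mvt_def)

lemma distr_comp:
  assumes N: "sets N = sets borel" and f: "f \<in> borel_measurable borel" and g: "g \<in> borel_measurable borel"
  shows "distr (distr N borel f) borel g = distr N borel (\<lambda>x. g (f x))"
proof -
  have fN: "f \<in> N \<rightarrow>\<^sub>M borel" by (subst measurable_cong_sets[OF N refl]) (rule f)
  show ?thesis using distr_distr[OF g fN] by (simp add: o_def)
qed

definition \<sigma>2 :: "('m + 1) + 'e \<Rightarrow> 'm + 'e option" where
  "\<sigma>2 z = (case z of Inl (Inl i) \<Rightarrow> Inl i | Inl (Inr _) \<Rightarrow> Inr None | Inr k \<Rightarrow> Inr (Some k))"

definition \<sigma>1 :: "('m + 'e) + 1 \<Rightarrow> 'm + 'e option" where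
  "\<sigma>1 z = (case z of Inl (Inl i) \<Rightarrow> Inl i | Inl (Inr k) \<Rightarrow> Inr (Some k) | Inr _ \<Rightarrow> Inr None)"

lemma bij_\<sigma>2: "bij \<sigma>2"
proof (rule o_bij)
  define \<tau> :: "'a + 'b option \<Rightarrow> ('a + 1) + 'b" where
    "\<tau> x = (case x of Inl i \<Rightarrow> Inl (Inl i) | Inr None \<Rightarrow> Inl (Inr 1) | Inr (Some k) \<Rightarrow> Inr k)" for x
  show "\<tau> \<circ> \<sigma>2 = id"
  proof
    fix z :: "('a + 1) + 'b"
    show "(\<tau> \<circ> \<sigma>2) z = id z"
      by (auto simp: \<tau>_def \<sigma>2_def num1_eq_iff split: sum.split option.split)
  qed
  show "\<sigma>2 \<circ> \<tau> = id"
  proof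
    fix x :: "'a + 'b option"
    show "(\<sigma>2 \<circ> \<tau>) x = id x"
      by (auto simp: \<tau>_def \<sigma>2_def split: sum.split option.split)
  qed
qed

lemma bij_\<sigma>1: "bij \<sigma>1"
proof (rule o_bij)
  define \<tau> :: "'a + 'b option \<Rightarrow> ('a + 'b) + 1" where
    "\<tau> x = (case x of Inl i \<Rightarrow> Inl (Inl i) | Inr None \<Rightarrow> Inr 1 | Inr (Some k) \<Rightarrow> Inl (Inr k))" for x
  show "\<tau> \<circ> \<sigma>1 = id"
  proof
    fix z :: "('a + 'b) + 1"
    show "(\<tau> \<circ> \<sigma>1) z = id z"
      by (auto simp: \<tau>_def \<sigma>1_def num1_eq_iff split: sum.split option.split)
  qed
  show "\<sigma>1 \<circ> \<tau> = id"
  proof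
    fix x :: "'a + 'b option"
    show "(\<sigma>1 \<circ> \<tau>) x = id x"
      by (auto simp: \<tau>_def \<sigma>1_def split: sum.split option.split)
  qed
qed

lemma A_meas: "{u :: real^('a::finite + 'b::finite). \<forall>i. u $ Inl i + tau $ i > 0} \<in> sets borel"
  by measurable

lemma S1_eq:
  fixes Om :: "real^('e::finite option)^('e option)" and Dl :: "real^('m::finite)^('e option)" and G :: "real^'m^'m"
  shows "(\<chi> j j'. Omega_star Om Dl G $ \<sigma>2 (Inl j) $ \<sigma>2 (Inl j'))
       = Omega_star (\<chi> (i::1) (j::1). Om $ None $ None) (\<chi> (i::1). Dl $ None) G"
proof -
  have "Omega_star Om Dl G $ \<sigma>2 (Inl a) $ \<sigma>2 (Inl b)
      = Omega_star (\<chi> (i::1) (j::1). Om $ None $ None) (\<chi> (i::1). Dl $ None) G $ a $ b" for a b :: "'m + 1"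
    by (cases a; cases b) (simp_all add: Omega_star_def Omega_bar_def omega_vec_def \<sigma>2_def)
  then show ?thesis by (simp add: vec_eq_iff)
qed

lemma Om1_posdef:
  fixes Om :: "real^('e::finite option)^('e option)"
  assumes "pos_def_mat Om"
  shows "pos_def_mat (\<chi> (i::1) (j::1). Om $ None $ None)"
proof -
  have "axis None 1 \<bullet> (Om *v axis None 1) > 0" using assms unfolding pos_def_mat_def
    by (metis axis_eq_0_iff zero_neq_one)
  moreover have "Om *v axis None 1 = (\<chi> i. Om $ i $ None)"
    by (simp add: matrix_vector_mult_def axis_def vec_eq_iff ite_mult2)
  ultimately have pos: "Om $ None $ None > 0"
    by (simp add: inner_axis')
  show ?thesis unfolding pos_def_mat_def
  proof (intro conjI allI impI)
    show "transpose (\<chi> (i::1) (j::1). Om $ None $ None) = (\<chi> (i::1) (j::1). Om $ None $ None)"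
      by (simp add: transpose_def vec_eq_iff)
    fix x :: "real^1" assume "x \<noteq> 0"
    then have "x $ 1 \<noteq> 0" by (simp add: vec_eq_iff)
    moreover have "x \<bullet> ((\<chi> (i::1) (j::1). Om $ None $ None) *v x) = Om $ None $ None * (x $ 1)^2"
      by (simp add: inner_vec_def matrix_vector_mult_def power2_eq_square algebra_simps)
    ultimately show "x \<bullet> ((\<chi> (i::1) (j::1). Om $ None $ None) *v x) > 0"
      using pos by simp
  qed
qed


theorem proposition7:
  fixes xi :: "real^('e::finite option)" and Om :: "real^('e option)^('e option)"
    and Dl :: "real^('m::finite)^('e option)" and tau :: "real^'m" and G :: "real^'m^'m"
    and nu :: real and M :: "'s measure" and Y :: "'s \<Rightarrow> real^('e option)"
  assumes "SUT_params Om Dl G nu"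
    and "prob_space M"
    and "Y \<in> borel_measurable M"
    and "distr M borel Y = SUT xi Om Dl tau G nu"
    and "\<forall>i j. Dl $ Some i $ j = 0"
  shows "distr M borel (\<lambda>s. (\<chi> i. Y s $ Some i - xi $ Some i))
           = distr M borel (\<lambda>s. (\<chi> i. - (Y s $ Some i - xi $ Some i)))
         \<and> (\<exists>(xi1 :: real^1) (Om1 :: real^1^1) (Dl1 :: real^'m^1) (tau1 :: real^'m) (G1 :: real^'m^'m) nu1.
           SUT_params Om1 Dl1 G1 nu1 \<and>
           distr M borel (\<lambda>s. (\<chi> i :: 1. Y s $ None)) = SUT xi1 Om1 Dl1 tau1 G1 nu1)"
proof -
  note par = assms(1)[unfolded SUT_params_def]
  have Ompd: "pos_def_mat Om" and Gc: "correlation_mat G" and Spd: "pos_def_mat (Omega_star Om Dl G)"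
    and nu: "nu > 0" using par by auto
  have Ym[measurable]: "Y \<in> M \<rightarrow>\<^sub>M borel" using assms(3) .
  define S where "S = Omega_star Om Dl G"
  define T where "T = mvt 0 S nu"
  define A where "A = {u :: real^('m + 'e option). \<forall>i. u $ Inl i + tau $ i > 0}"
  define C where "C = density T (\<lambda>u. indicator A u / emeasure T A)"
  define F where "F u = (\<chi> j. xi $ j + omega_vec Om $ j * u $ Inr j)" for u :: "real^('m + 'e option)"
  have Am[measurable]: "A \<in> sets borel" unfolding A_def by (rule A_meas)
  have Fm[measurable]: "F \<in> borel_measurable borel" unfolding F_def by (intro vec_measurableI) measurable
  have sT: "sets T = sets borel" unfolding T_def by simp
  have sC: "sets C = sets borel" unfolding C_def using sT by simp
  have SUT_eq: "SUT xi Om Dl tau G nu = distr C borel F"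
    unfolding SUT_def Let_def C_def T_def A_def F_def S_def by simp
  have Mdist: "distr M borel Y = distr C borel F" using assms(4) SUT_eq by simp
  have TA: "emeasure T A \<noteq> 0" "emeasure T A \<noteq> top"
  proof -
    have "emeasure (distr M borel Y) UNIV = 1"
      using assms(2) by (simp add: emeasure_distr prob_space.emeasure_space_1)
    moreover have "emeasure (distr C borel F) UNIV = emeasure C (space C)"
      by (subst emeasure_distr) (auto simp: sets_eq_imp_space_eq[OF sC] measurable_cong_sets[OF sC refl])
    moreover have "emeasure C (space C) = emeasure T A / emeasure T A"
      unfolding C_def using density_cond_mass[of A T] sT by simp
    ultimately have "emeasure T A / emeasure T A = 1" using Mdist by simp
    then show "emeasure T A \<noteq> 0" "emeasure T A \<noteq> top" using ennreal_self_div_one by blast+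
  qed
  have general: "distr M borel (\<lambda>s. g (Y s)) = distr C borel (\<lambda>u. g (F u))"
    if gm: "g \<in> borel_measurable borel" for g :: "real^('e option) \<Rightarrow> real^'z::finite"
  proof -
    have "distr M borel (\<lambda>s. g (Y s)) = distr (distr M borel Y) borel g"
      using distr_distr[OF gm Ym] by (simp add: o_def)
    also have "\<dots> = distr C borel (\<lambda>u. g (F u))" unfolding Mdist by (rule distr_comp[OF sC Fm gm])
    finally show ?thesis .
  qed
  define Om1 where "Om1 = (\<chi> (i::1) (j::1). Om $ None $ None)"
  define Dl1 where "Dl1 = (\<chi> (i::1). Dl $ None)"
  define xi1 where "xi1 = (\<chi> (i::1). xi $ None)"
  define S1 where "S1 = (\<chi> j j'. S $ \<sigma>2 (Inl j) $ \<sigma>2 (Inl j'))"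
  have S1eq: "S1 = Omega_star Om1 Dl1 G" unfolding S1_def S_def Om1_def Dl1_def by (rule S1_eq)
  have inj2: "inj (\<lambda>j. \<sigma>2 (Inl j) :: 'm + 'e option)"
    using bij_\<sigma>2 by (auto simp: inj_def bij_def)
  have S1pd: "pos_def_mat S1"
    unfolding S1_def S_def
    using posdef_compress[OF Spd emb_TT[OF inj2]] emb_compress[OF inj2] by simp
  have par1: "SUT_params Om1 Dl1 G nu"
    unfolding SUT_params_def using Om1_posdef[OF Ompd] Gc S1pd S1eq nu by (simp add: Om1_def)
  define \<pi>2 where "\<pi>2 x = fst (splitv \<sigma>2 x)" for x :: "real^('m + 'e option)"
  obtain \<kappa>2 where K2: "distr T borel \<pi>2 = density (mvt 0 S1 nu) (\<lambda>_. \<kappa>2)"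
    using mvt_marginal[OF bij_\<sigma>2 Spd nu] unfolding T_def S_def \<pi>2_def S1_def by blast
  have \<pi>2m[measurable]: "\<pi>2 \<in> borel_measurable borel"
    unfolding \<pi>2_def by (rule measurable_compose[OF splitv_measurable]) (intro borel_measurable_continuous_onI continuous_intros)
  have \<pi>2_nth: "\<pi>2 x $ j = x $ \<sigma>2 (Inl j)" for x j by (simp add: \<pi>2_def splitv_def)
  define A1 where "A1 = {v :: real^('m + 1). \<forall>i. v $ Inl i + tau $ i > 0}"
  have A1m: "A1 \<in> sets borel" unfolding A1_def by (rule A_meas)
  have Apre2: "A = \<pi>2 -` A1" unfolding A_def A1_def by (auto simp: \<pi>2_nth \<sigma>2_def)
  have C2: "distr C borel \<pi>2 = density (mvt 0 S1 nu) (\<lambda>v. indicator A1 v / emeasure (mvt 0 S1 nu) A1)"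
    unfolding C_def Apre2 by (rule cond_lemma[OF sT _ \<pi>2m K2 A1m]) (use TA Apre2 in simp_all)
  define F1 where "F1 v = (\<chi> j. xi1 $ j + omega_vec Om1 $ j * v $ Inr j)" for v :: "real^('m + 1)"
  have F1m: "F1 \<in> borel_measurable borel" unfolding F1_def by (intro vec_measurableI) measurable
  have FF1: "(\<chi> (i::1). F u $ None) = F1 (\<pi>2 u)" for u
    by (simp add: vec_eq_iff F_def F1_def \<pi>2_nth \<sigma>2_def xi1_def omega_vec_def Om1_def)
  have g2m: "(\<lambda>y::real^('e option). \<chi> (i::1). y $ None) \<in> borel_measurable borel"
    by (intro vec_measurableI) measurable
  have "distr M borel (\<lambda>s. (\<chi> i :: 1. Y s $ None)) = distr C borel (\<lambda>u. (\<chi> (i::1). F u $ None))"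
    by (rule general[OF g2m])
  also have "\<dots> = distr C borel (\<lambda>u. F1 (\<pi>2 u))" by (simp only: FF1)
  also have "\<dots> = distr (distr C borel \<pi>2) borel F1" by (rule distr_comp[OF sC \<pi>2m F1m, symmetric])
  also have "\<dots> = SUT xi1 Om1 Dl1 tau G nu"
    unfolding C2 SUT_def Let_def S1eq[symmetric] A1_def F1_def by simp
  finally have part2: "distr M borel (\<lambda>s. (\<chi> i :: 1. Y s $ None)) = SUT xi1 Om1 Dl1 tau G nu" .
  define S2 where "S2 = (\<chi> j j'. S $ \<sigma>1 (Inl j) $ \<sigma>1 (Inl j'))"
  have inj1: "inj (\<lambda>j. \<sigma>1 (Inl j) :: 'm + 'e option)"
    using bij_\<sigma>1 by (auto simp: inj_def bij_def)
  have S2pd: "pos_def_mat S2"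
    unfolding S2_def S_def
    using posdef_compress[OF Spd emb_TT[OF inj1]] emb_compress[OF inj1] by simp
  have z1: "S2 $ Inl i $ Inr k = 0" for i k
    using assms(5) by (simp add: S2_def S_def \<sigma>1_def Omega_star_def)
  have z2: "S2 $ Inr k $ Inl i = 0" for i k
    using assms(5) by (simp add: S2_def S_def \<sigma>1_def Omega_star_def)
  define \<pi>1 where "\<pi>1 x = fst (splitv \<sigma>1 x)" for x :: "real^('m + 'e option)"
  obtain \<kappa>1 where K1: "distr T borel \<pi>1 = density (mvt 0 S2 nu) (\<lambda>_. \<kappa>1)"
    using mvt_marginal[OF bij_\<sigma>1 Spd nu] unfolding T_def S_def \<pi>1_def S2_def by blast
  have \<pi>1m[measurable]: "\<pi>1 \<in> borel_measurable borel"
    unfolding \<pi>1_def by (rule measurable_compose[OF splitv_measurable]) (intro borel_measurable_continuous_onI continuous_intros)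
  have \<pi>1_nth: "\<pi>1 x $ j = x $ \<sigma>1 (Inl j)" for x j by (simp add: \<pi>1_def splitv_def)
  define A2 where "A2 = {v :: real^('m + 'e). \<forall>i. v $ Inl i + tau $ i > 0}"
  have A2m: "A2 \<in> sets borel" unfolding A2_def by (rule A_meas)
  have Apre1: "A = \<pi>1 -` A2" unfolding A_def A2_def by (auto simp: \<pi>1_nth \<sigma>1_def)
  define C2 where "C2 = density (mvt 0 S2 nu) (\<lambda>v. indicator A2 v / emeasure (mvt 0 S2 nu) A2)"
  have sC2: "sets C2 = sets borel" unfolding C2_def by simp
  have C1: "distr C borel \<pi>1 = C2"
    unfolding C_def Apre1 C2_def by (rule cond_lemma[OF sT _ \<pi>1m K1 A2m]) (use TA Apre1 in simp_all)
  have Rfl: "distr C2 borel reflv = C2"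
    unfolding C2_def by (rule cond_reflv[OF S2pd z1 z2]) (auto simp: A2_def A2m)
  define H where "H v = (\<chi> i. omega_vec Om $ Some i * v $ Inr i)" for v :: "real^('m + 'e)"
  have Hm: "H \<in> borel_measurable borel" unfolding H_def by (intro vec_measurableI) measurable
  have nHm: "(\<lambda>v. - H v) \<in> borel_measurable borel" using Hm by measurable
  have FH: "(\<chi> i. F u $ Some i - xi $ Some i) = H (\<pi>1 u)" for u
    by (simp add: vec_eq_iff F_def H_def \<pi>1_nth \<sigma>1_def)
  have FH': "(\<chi> i. - (F u $ Some i - xi $ Some i)) = - H (\<pi>1 u)" for u
    by (simp add: vec_eq_iff F_def H_def \<pi>1_nth \<sigma>1_def)
  have HR: "- H (reflv v) = H v" for v by (simp add: vec_eq_iff H_def)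
  have g1m: "(\<lambda>y::real^('e option). \<chi> i. y $ Some i - xi $ Some i) \<in> borel_measurable borel"
    by (intro vec_measurableI) measurable
  have g1m': "(\<lambda>y::real^('e option). \<chi> i. - (y $ Some i - xi $ Some i)) \<in> borel_measurable borel"
    by (intro vec_measurableI) measurable
  have "distr M borel (\<lambda>s. (\<chi> i. Y s $ Some i - xi $ Some i)) = distr C borel (\<lambda>u. H (\<pi>1 u))"
    using general[OF g1m] by (simp only: FH)
  also have "\<dots> = distr C2 borel H" unfolding C1[symmetric] by (rule distr_comp[OF sC \<pi>1m Hm, symmetric])
  finally have L: "distr M borel (\<lambda>s. (\<chi> i. Y s $ Some i - xi $ Some i)) = distr C2 borel H" .
  have "distr M borel (\<lambda>s. (\<chi> i. - (Y s $ Some i - xi $ Some i))) = distr C borel (\<lambda>u. - H (\<pi>1 u))"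
    using general[OF g1m'] by (simp only: FH')
  also have "\<dots> = distr C2 borel (\<lambda>v. - H v)" unfolding C1[symmetric] by (rule distr_comp[OF sC \<pi>1m nHm, symmetric])
  also have "\<dots> = distr (distr C2 borel reflv) borel (\<lambda>v. - H v)" by (simp only: Rfl)
  also have "\<dots> = distr C2 borel (\<lambda>v. - H (reflv v))" by (rule distr_comp[OF sC2 reflv_meas nHm])
  also have "\<dots> = distr C2 borel H" by (simp only: HR)
  finally have R: "distr M borel (\<lambda>s. (\<chi> i. - (Y s $ Some i - xi $ Some i))) = distr C2 borel H" .
  show ?thesis
    apply (rule conjI)
     apply (simp only: L R)
    apply (rule exI[of _ xi1], rule exI[of _ Om1], rule exI[of _ Dl1], rule exI[of _ tau], rule exI[of _ G], rule exI[of _ nu])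
    using par1 part2 by simp
qed


end
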